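(* If $G$ is any blowup of $F_3$, then $\chi(G)\le\lceil\frac54\omega(G)\rceil$.
   Context: $F_3$ is the graph on $\{v_1,\dots,v_6,x,y,z\}$ where $v_1\cdots v_6v_1$ is an induced 6-cycle, $x$ is adjacent to $v_1,v_2,v_3$, $y$ to $v_3,v_4,v_5$, $z$ to $v_5,v_6,v_1$, $\{x,y,z\}$ is a triangle, and there are no other edges. A blowup of $H$ is any graph whose vertex set can be partitioned into $|V(H)|$ (not necessarily non-empty) cliques $Q_v$, $v\in V(H)$, with $Q_u$ complete to $Q_v$ if $uv\in E(H)$ and no edges between $Q_u$ and $Q_v$ if $uv\notin E(H)$. *)

theory Defs
  imports Complex_Main
begin

(* A (finite simple) graph is given by a vertex set V and a symmetric,
   irreflexive adjacency relation E (only its restriction to V matters). *)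

definition simple_graph :: "'a set \<Rightarrow> ('a \<Rightarrow> 'a \<Rightarrow> bool) \<Rightarrow> bool" where
  "simple_graph V E \<longleftrightarrow> finite V \<and> (\<forall>x\<in>V. \<forall>y\<in>V. E x y \<longrightarrow> E y x) \<and> (\<forall>x\<in>V. \<not> E x x)"

definition is_clique :: "'a set \<Rightarrow> ('a \<Rightarrow> 'a \<Rightarrow> bool) \<Rightarrow> 'a set \<Rightarrow> bool" where
  "is_clique V E K \<longleftrightarrow> K \<subseteq> V \<and> (\<forall>x\<in>K. \<forall>y\<in>K. x \<noteq> y \<longrightarrow> E x y)"

definition clique_number :: "'a set \<Rightarrow> ('a \<Rightarrow> 'a \<Rightarrow> bool) \<Rightarrow> nat" where
  "clique_number V E = Max {card K | K. is_clique V E K}"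

definition colouring :: "'a set \<Rightarrow> ('a \<Rightarrow> 'a \<Rightarrow> bool) \<Rightarrow> nat \<Rightarrow> ('a \<Rightarrow> nat) \<Rightarrow> bool" where
  "colouring V E k c \<longleftrightarrow> (\<forall>x\<in>V. c x < k) \<and> (\<forall>x\<in>V. \<forall>y\<in>V. E x y \<longrightarrow> c x \<noteq> c y)"

definition chromatic_number :: "'a set \<Rightarrow> ('a \<Rightarrow> 'a \<Rightarrow> bool) \<Rightarrow> nat" where
  "chromatic_number V E = (LEAST k. \<exists>c. colouring V E k c)"

datatype F3v = v1 | v2 | v3 | v4 | v5 | v6 | x | y | z

definition F3_edges :: "(F3v \<times> F3v) set" where
  "F3_edges = {(v1,v2),(v2,v3),(v3,v4),(v4,v5),(v5,v6),(v6,v1),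
               (x,v1),(x,v2),(x,v3),
               (y,v3),(y,v4),(y,v5),
               (z,v5),(z,v6),(z,v1),
               (x,y),(y,z),(z,x)}"

definition F3_adj :: "F3v \<Rightarrow> F3v \<Rightarrow> bool" where
  "F3_adj u w \<longleftrightarrow> (u, w) \<in> F3_edges \<or> (w, u) \<in> F3_edges"

definition is_blowup :: "'a set \<Rightarrow> ('a \<Rightarrow> 'a \<Rightarrow> bool) \<Rightarrow> ('b \<Rightarrow> 'b \<Rightarrow> bool) \<Rightarrow> bool" where
  "is_blowup V E A \<longleftrightarrow> (\<exists>Q :: 'b \<Rightarrow> 'a set.
      (\<Union>h. Q h) = V \<and>
      (\<forall>u w. u \<noteq> w \<longrightarrow> Q u \<inter> Q w = {}) \<and>
      (\<forall>h. is_clique V E (Q h)) \<and>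
      (\<forall>u w a b. u \<noteq> w \<longrightarrow> a \<in> Q u \<longrightarrow> b \<in> Q w \<longrightarrow> (E a b \<longleftrightarrow> A u w)))"

end

theory Submission
  imports Defs
begin

definition gcol :: "nat \<Rightarrow> nat \<Rightarrow> nat \<Rightarrow> nat \<Rightarrow> nat \<Rightarrow> nat \<Rightarrow> nat \<Rightarrow> F3v \<Rightarrow> nat \<Rightarrow> nat" where
"gcol p q r al be ga k h i = (case h of
   x \<Rightarrow> i | y \<Rightarrow> p+i | z \<Rightarrow> p+q+i
 | v1 \<Rightarrow> (if i < q-be then p+be+i else p+q+r+(i-(q-be)))
 | v3 \<Rightarrow> (if i < r-ga then p+q+ga+i else p+q+r+(i-(r-ga)))
 | v5 \<Rightarrow> (if i < p-al then al+i else p+q+r+(i-(p-al)))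
 | v2 \<Rightarrow> (if i < be then p+i else if i < be+ga then p+q+(i-be) else k-1-(i-(be+ga)))
 | v4 \<Rightarrow> (if i < al then i else if i < al+ga then p+q+(i-al) else k-1-(i-(al+ga)))
 | v6 \<Rightarrow> (if i < al then i else if i < al+be then p+(i-al) else k-1-(i-(al+be))))"

locale cpar =
  fixes a :: "F3v \<Rightarrow> nat" and p q r al be ga k b1 b2 b3 b4 b5 b6 :: nat
  assumes pq: "p = a x" "q = a y" "r = a z"
  and lims: "al \<le> p" "be \<le> q" "ga \<le> r"
  and cov: "a v1 + be \<le> q + b1" "a v2 \<le> be+ga+b2" "a v3 + ga \<le> r + b3"
     "a v4 \<le> al+ga+b4" "a v5 + al \<le> p+b5" "a v6 \<le> al+be+b6"
  and pairs: "b1+b2+(p+q+r) \<le> k" "b2+b3+(p+q+r) \<le> k" "b3+b4+(p+q+r) \<le> k"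
     "b4+b5+(p+q+r) \<le> k" "b5+b6+(p+q+r) \<le> k" "b6+b1+(p+q+r) \<le> k"
begin

abbreviation "g \<equiv> gcol p q r al be ga k"
lemma s_le: "p+q+r \<le> k" using pairs(1) by arith

lemma range_v1: "i < a v1 \<Longrightarrow> g v1 i < k"
  using lims s_le cov(1) pairs(1,6) by (simp add: gcol_def; arith)

lemma inj_v1: "i < a v1 \<Longrightarrow> j < a v1 \<Longrightarrow> g v1 i = g v1 j \<Longrightarrow> i = j"
  using lims s_le cov(1) pairs(1,6) by (simp add: gcol_def split: if_splits; arith)

lemma range_v2: "i < a v2 \<Longrightarrow> g v2 i < k"
  using lims s_le cov(2) pairs(1,2) by (simp add: gcol_def; arith)

lemma inj_v2: "i < a v2 \<Longrightarrow> j < a v2 \<Longrightarrow> g v2 i = g v2 j \<Longrightarrow> i = j"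
  using lims s_le cov(2) pairs(1,2) by (simp add: gcol_def split: if_splits; arith)

lemma range_v3: "i < a v3 \<Longrightarrow> g v3 i < k"
  using lims s_le cov(3) pairs(2,3) by (simp add: gcol_def; arith)

lemma inj_v3: "i < a v3 \<Longrightarrow> j < a v3 \<Longrightarrow> g v3 i = g v3 j \<Longrightarrow> i = j"
  using lims s_le cov(3) pairs(2,3) by (simp add: gcol_def split: if_splits; arith)

lemma range_v4: "i < a v4 \<Longrightarrow> g v4 i < k"
  using lims s_le cov(4) pairs(3,4) by (simp add: gcol_def; arith)

lemma inj_v4: "i < a v4 \<Longrightarrow> j < a v4 \<Longrightarrow> g v4 i = g v4 j \<Longrightarrow> i = j"
  using lims s_le cov(4) pairs(3,4) by (simp add: gcol_def split: if_splits; arith)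

lemma range_v5: "i < a v5 \<Longrightarrow> g v5 i < k"
  using lims s_le cov(5) pairs(4,5) by (simp add: gcol_def; arith)

lemma inj_v5: "i < a v5 \<Longrightarrow> j < a v5 \<Longrightarrow> g v5 i = g v5 j \<Longrightarrow> i = j"
  using lims s_le cov(5) pairs(4,5) by (simp add: gcol_def split: if_splits; arith)

lemma range_v6: "i < a v6 \<Longrightarrow> g v6 i < k"
  using lims s_le cov(6) pairs(5,6) by (simp add: gcol_def; arith)

lemma inj_v6: "i < a v6 \<Longrightarrow> j < a v6 \<Longrightarrow> g v6 i = g v6 j \<Longrightarrow> i = j"
  using lims s_le cov(6) pairs(5,6) by (simp add: gcol_def split: if_splits; arith)

lemma range_x: "i < a x \<Longrightarrow> g x i < k"
  using lims s_le pq(1) by (simp add: gcol_def; arith)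

lemma inj_x: "i < a x \<Longrightarrow> j < a x \<Longrightarrow> g x i = g x j \<Longrightarrow> i = j"
  using lims s_le pq(1) by (simp add: gcol_def split: if_splits; arith)

lemma range_y: "i < a y \<Longrightarrow> g y i < k"
  using lims s_le pq(2) by (simp add: gcol_def; arith)

lemma inj_y: "i < a y \<Longrightarrow> j < a y \<Longrightarrow> g y i = g y j \<Longrightarrow> i = j"
  using lims s_le pq(2) by (simp add: gcol_def split: if_splits; arith)

lemma range_z: "i < a z \<Longrightarrow> g z i < k"
  using lims s_le pq(3) by (simp add: gcol_def; arith)

lemma inj_z: "i < a z \<Longrightarrow> j < a z \<Longrightarrow> g z i = g z j \<Longrightarrow> i = j"
  using lims s_le pq(3) by (simp add: gcol_def split: if_splits; arith)

lemma disj_v1_v2: "i < a v1 \<Longrightarrow> j < a v2 \<Longrightarrow> g v1 i \<noteq> g v2 j"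
  using lims s_le cov(1,2) pairs(1,2,6) by (simp add: gcol_def; arith)

lemma disj_v2_v3: "i < a v2 \<Longrightarrow> j < a v3 \<Longrightarrow> g v2 i \<noteq> g v3 j"
  using lims s_le cov(2,3) pairs(1,2,3) by (simp add: gcol_def; arith)

lemma disj_v3_v4: "i < a v3 \<Longrightarrow> j < a v4 \<Longrightarrow> g v3 i \<noteq> g v4 j"
  using lims s_le cov(3,4) pairs(2,3,4) by (simp add: gcol_def; arith)

lemma disj_v4_v5: "i < a v4 \<Longrightarrow> j < a v5 \<Longrightarrow> g v4 i \<noteq> g v5 j"
  using lims s_le cov(4,5) pairs(3,4,5) by (simp add: gcol_def; arith)

lemma disj_v5_v6: "i < a v5 \<Longrightarrow> j < a v6 \<Longrightarrow> g v5 i \<noteq> g v6 j"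
  using lims s_le cov(5,6) pairs(4,5,6) by (simp add: gcol_def; arith)

lemma disj_v6_v1: "i < a v6 \<Longrightarrow> j < a v1 \<Longrightarrow> g v6 i \<noteq> g v1 j"
  using lims s_le cov(1,6) pairs(1,5,6) by (simp add: gcol_def; arith)

lemma disj_x_v1: "i < a x \<Longrightarrow> j < a v1 \<Longrightarrow> g x i \<noteq> g v1 j"
  using lims s_le cov(1) pairs(1,6) pq(1) by (simp add: gcol_def; arith)

lemma disj_x_v2: "i < a x \<Longrightarrow> j < a v2 \<Longrightarrow> g x i \<noteq> g v2 j"
  using lims s_le cov(2) pairs(1,2) pq(1) by (simp add: gcol_def; arith)

lemma disj_x_v3: "i < a x \<Longrightarrow> j < a v3 \<Longrightarrow> g x i \<noteq> g v3 j"
  using lims s_le cov(3) pairs(2,3) pq(1) by (simp add: gcol_def; arith)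

lemma disj_y_v3: "i < a y \<Longrightarrow> j < a v3 \<Longrightarrow> g y i \<noteq> g v3 j"
  using lims s_le cov(3) pairs(2,3) pq(2) by (simp add: gcol_def; arith)

lemma disj_y_v4: "i < a y \<Longrightarrow> j < a v4 \<Longrightarrow> g y i \<noteq> g v4 j"
  using lims s_le cov(4) pairs(3,4) pq(2) by (simp add: gcol_def; arith)

lemma disj_y_v5: "i < a y \<Longrightarrow> j < a v5 \<Longrightarrow> g y i \<noteq> g v5 j"
  using lims s_le cov(5) pairs(4,5) pq(2) by (simp add: gcol_def; arith)

lemma disj_z_v5: "i < a z \<Longrightarrow> j < a v5 \<Longrightarrow> g z i \<noteq> g v5 j"
  using lims s_le cov(5) pairs(4,5) pq(3) by (simp add: gcol_def; arith)

lemma disj_z_v6: "i < a z \<Longrightarrow> j < a v6 \<Longrightarrow> g z i \<noteq> g v6 j"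
  using lims s_le cov(6) pairs(5,6) pq(3) by (simp add: gcol_def; arith)

lemma disj_z_v1: "i < a z \<Longrightarrow> j < a v1 \<Longrightarrow> g z i \<noteq> g v1 j"
  using lims s_le cov(1) pairs(1,6) pq(3) by (simp add: gcol_def; arith)

lemma disj_x_y: "i < a x \<Longrightarrow> j < a y \<Longrightarrow> g x i \<noteq> g y j"
  using lims s_le pq(1,2) by (simp add: gcol_def; arith)

lemma disj_y_z: "i < a y \<Longrightarrow> j < a z \<Longrightarrow> g y i \<noteq> g z j"
  using lims s_le pq(2,3) by (simp add: gcol_def; arith)

lemma disj_z_x: "i < a z \<Longrightarrow> j < a x \<Longrightarrow> g z i \<noteq> g x j"
  using lims s_le pq(1,3) by (simp add: gcol_def; arith)

lemma disj_v2_v1: "i < a v2 \<Longrightarrow> j < a v1 \<Longrightarrow> g v2 i \<noteq> g v1 j"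
  using disj_v1_v2 by metis

lemma disj_v3_v2: "i < a v3 \<Longrightarrow> j < a v2 \<Longrightarrow> g v3 i \<noteq> g v2 j"
  using disj_v2_v3 by metis

lemma disj_v4_v3: "i < a v4 \<Longrightarrow> j < a v3 \<Longrightarrow> g v4 i \<noteq> g v3 j"
  using disj_v3_v4 by metis

lemma disj_v5_v4: "i < a v5 \<Longrightarrow> j < a v4 \<Longrightarrow> g v5 i \<noteq> g v4 j"
  using disj_v4_v5 by metis

lemma disj_v6_v5: "i < a v6 \<Longrightarrow> j < a v5 \<Longrightarrow> g v6 i \<noteq> g v5 j"
  using disj_v5_v6 by metis

lemma disj_v1_v6: "i < a v1 \<Longrightarrow> j < a v6 \<Longrightarrow> g v1 i \<noteq> g v6 j"
  using disj_v6_v1 by metis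

lemma disj_v1_x: "i < a v1 \<Longrightarrow> j < a x \<Longrightarrow> g v1 i \<noteq> g x j"
  using disj_x_v1 by metis

lemma disj_v2_x: "i < a v2 \<Longrightarrow> j < a x \<Longrightarrow> g v2 i \<noteq> g x j"
  using disj_x_v2 by metis

lemma disj_v3_x: "i < a v3 \<Longrightarrow> j < a x \<Longrightarrow> g v3 i \<noteq> g x j"
  using disj_x_v3 by metis

lemma disj_v3_y: "i < a v3 \<Longrightarrow> j < a y \<Longrightarrow> g v3 i \<noteq> g y j"
  using disj_y_v3 by metis

lemma disj_v4_y: "i < a v4 \<Longrightarrow> j < a y \<Longrightarrow> g v4 i \<noteq> g y j"
  using disj_y_v4 by metis

lemma disj_v5_y: "i < a v5 \<Longrightarrow> j < a y \<Longrightarrow> g v5 i \<noteq> g y j"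
  using disj_y_v5 by metis

lemma disj_v5_z: "i < a v5 \<Longrightarrow> j < a z \<Longrightarrow> g v5 i \<noteq> g z j"
  using disj_z_v5 by metis

lemma disj_v6_z: "i < a v6 \<Longrightarrow> j < a z \<Longrightarrow> g v6 i \<noteq> g z j"
  using disj_z_v6 by metis

lemma disj_v1_z: "i < a v1 \<Longrightarrow> j < a z \<Longrightarrow> g v1 i \<noteq> g z j"
  using disj_z_v1 by metis

lemma disj_y_x: "i < a y \<Longrightarrow> j < a x \<Longrightarrow> g y i \<noteq> g x j"
  using disj_x_y by metis

lemma disj_z_y: "i < a z \<Longrightarrow> j < a y \<Longrightarrow> g z i \<noteq> g y j"
  using disj_y_z by metis

lemma disj_x_z: "i < a x \<Longrightarrow> j < a z \<Longrightarrow> g x i \<noteq> g z j"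
  using disj_z_x by metis

lemma range: "i < a h \<Longrightarrow> g h i < k"
  by (cases h) (simp_all add: range_v1 range_v2 range_v3 range_v4 range_v5 range_v6 range_x range_y range_z)

lemma inj: "i < a h \<Longrightarrow> j < a h \<Longrightarrow> g h i = g h j \<Longrightarrow> i = j"
  by (cases h) (simp_all add: inj_v1 inj_v2 inj_v3 inj_v4 inj_v5 inj_v6 inj_x inj_y inj_z)

lemma disj: "F3_adj u w \<Longrightarrow> i < a u \<Longrightarrow> j < a w \<Longrightarrow> g u i \<noteq> g w j"
  by (cases u; cases w) (simp_all add: F3_adj_def F3_edges_def disj_v1_v2 disj_v2_v1 disj_v2_v3 disj_v3_v2 disj_v3_v4 disj_v4_v3 disj_v4_v5 disj_v5_v4 disj_v5_v6 disj_v6_v5 disj_v6_v1 disj_v1_v6 disj_x_v1 disj_v1_x disj_x_v2 disj_v2_x disj_x_v3 disj_v3_x disj_y_v3 disj_v3_y disj_y_v4 disj_v4_y disj_y_v5 disj_v5_y disj_z_v5 disj_v5_z disj_z_v6 disj_v6_z disj_z_v1 disj_v1_z disj_x_y disj_y_x disj_y_z disj_z_y disj_z_x disj_x_z)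
end

lemma core:
  fixes a1 a2 a3 a4 a5 a6 p q r om k al be ga :: nat
  assumes t: "p+q+r \<le> om" "p+q+a3 \<le> om" "q+r+a5 \<le> om" "r+p+a1 \<le> om"
   "p+a1+a2 \<le> om" "p+a2+a3 \<le> om" "q+a3+a4 \<le> om" "q+a4+a5 \<le> om" "r+a5+a6 \<le> om" "r+a6+a1 \<le> om"
   and kk: "5*om \<le> 4*k"
  and dal: "al = min p (k-(q+r+a5))" and dbe: "be = min q (k-(p+r+a1))" and dga: "ga = min r (k-(p+q+a3))"
  shows "(a1-(q-be)) + (a2-(be+ga)) + (p+q+r) \<le> k" and "(a2-(be+ga)) + (a3-(r-ga)) + (p+q+r) \<le> k" and "(a3-(r-ga)) + (a4-(al+ga)) + (p+q+r) \<le> k" and "(a4-(al+ga)) + (a5-(p-al)) + (p+q+r) \<le> k" and "(a5-(p-al)) + (a6-(al+be)) + (p+q+r) \<le> k" and "(a6-(al+be)) + (a1-(q-be)) + (p+q+r) \<le> k"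
proof -
  have "p+r+a1 \<le> k" "p+q+a3 \<le> k" "q+r+a5 \<le> k" using t kk by linarith+
  have l: "al \<le> p" "al + (q+r+a5) \<le> k" "al = p \<or> al + (q+r+a5) = k" using dal \<open>q+r+a5 \<le> k\<close> by auto
  have b: "be \<le> q" "be + (p+r+a1) \<le> k" "be = q \<or> be + (p+r+a1) = k" using dbe \<open>p+r+a1 \<le> k\<close> by auto
  have g: "ga \<le> r" "ga + (p+q+a3) \<le> k" "ga = r \<or> ga + (p+q+a3) = k" using dga \<open>p+q+a3 \<le> k\<close> by auto
  show "(a1-(q-be)) + (a2-(be+ga)) + (p+q+r) \<le> k" using b g t kk by arith
  show "(a2-(be+ga)) + (a3-(r-ga)) + (p+q+r) \<le> k" using b g t kk by arith
  show "(a3-(r-ga)) + (a4-(al+ga)) + (p+q+r) \<le> k" using l g t kk by arith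
  show "(a4-(al+ga)) + (a5-(p-al)) + (p+q+r) \<le> k" using l g t kk by arith
  show "(a5-(p-al)) + (a6-(al+be)) + (p+q+r) \<le> k" using l b t kk by arith
  show "(a6-(al+be)) + (a1-(q-be)) + (p+q+r) \<le> k" using l b t kk by arith
qed


theorem theorem5p7:
  fixes V :: "'a set" and E :: "'a \<Rightarrow> 'a \<Rightarrow> bool"
  assumes "simple_graph V E"
    and "is_blowup V E F3_adj"
  shows "int (chromatic_number V E) \<le> \<lceil>(5/4::real) * real (clique_number V E)\<rceil>"
proof -
  from assms(2) obtain Q :: "F3v \<Rightarrow> 'a set" where
    QU: "(\<Union>h. Q h) = V" and QD: "\<And>u w. u \<noteq> w \<Longrightarrow> Q u \<inter> Q w = {}"
    and QC: "\<And>h. is_clique V E (Q h)"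
    and QE: "\<And>u w a b. u \<noteq> w \<Longrightarrow> a \<in> Q u \<Longrightarrow> b \<in> Q w \<Longrightarrow> (E a b \<longleftrightarrow> F3_adj u w)"
    unfolding is_blowup_def by blast
  have finV: "finite V" and irr: "\<And>v. v \<in> V \<Longrightarrow> \<not> E v v"
    using assms(1) by (auto simp: simple_graph_def)
  have QV: "Q h \<subseteq> V" for h using QU by auto
  have finQ: "finite (Q h)" for h using finite_subset[OF QV finV] .
  define om where "om = clique_number V E"
  define a where "a h = card (Q h)" for h
  have finC: "finite {card K |K. is_clique V E K}"
  proof -
    have "{card K |K. is_clique V E K} \<subseteq> {..card V}"
      using finV by (auto simp: is_clique_def intro: card_mono)
    thus ?thesis using finite_subset by blast
  qed
  have adjsym: "F3_adj u w = F3_adj w u" for u w by (auto simp: F3_adj_def)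
  have tri: "a u + a v + a w \<le> om"
    if d: "u \<noteq> v" "v \<noteq> w" "u \<noteq> w" and ad: "F3_adj u v" "F3_adj v w" "F3_adj u w" for u v w
  proof -
    let ?K = "Q u \<union> Q v \<union> Q w"
    have key: "E s t" if "h1 \<in> {u,v,w}" "h2 \<in> {u,v,w}" "s \<in> Q h1" "t \<in> Q h2" "s \<noteq> t" for h1 h2 s t
    proof (cases "h1 = h2")
      case True
      then show ?thesis using QC[of h1] that by (auto simp: is_clique_def)
    next
      case False
      then have "F3_adj h1 h2" using that(1,2) ad adjsym by auto
      then show ?thesis using QE[OF False that(3,4)] by simp
    qed
    have cl: "is_clique V E ?K"
      unfolding is_clique_def
    proof (intro conjI ballI impI)
      show "?K \<subseteq> V" using QV by auto
      fix s t assume "s \<in> ?K" "t \<in> ?K" "s \<noteq> t"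
      then show "E s t" using key by blast
    qed
    have "card ?K = a u + a v + a w"
      unfolding a_def using finQ QD d
      by (subst card_Un_disjoint; auto simp: card_Un_disjoint)
    moreover have "card ?K \<le> om"
      unfolding om_def clique_number_def using cl finC by (intro Max_ge) auto
    ultimately show ?thesis by simp
  qed
  have t1: "a x + a y + a z \<le> om" by (rule tri) (simp_all add: F3_adj_def F3_edges_def)
  have t2: "a x + a y + a v3 \<le> om" by (rule tri) (simp_all add: F3_adj_def F3_edges_def)
  have t3: "a y + a z + a v5 \<le> om" by (rule tri) (simp_all add: F3_adj_def F3_edges_def)
  have t4: "a z + a x + a v1 \<le> om" by (rule tri) (simp_all add: F3_adj_def F3_edges_def)
  have t5: "a x + a v1 + a v2 \<le> om" by (rule tri) (simp_all add: F3_adj_def F3_edges_def)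
  have t6: "a x + a v2 + a v3 \<le> om" by (rule tri) (simp_all add: F3_adj_def F3_edges_def)
  have t7: "a y + a v3 + a v4 \<le> om" by (rule tri) (simp_all add: F3_adj_def F3_edges_def)
  have t8: "a y + a v4 + a v5 \<le> om" by (rule tri) (simp_all add: F3_adj_def F3_edges_def)
  have t9: "a z + a v5 + a v6 \<le> om" by (rule tri) (simp_all add: F3_adj_def F3_edges_def)
  have t10: "a z + a v6 + a v1 \<le> om" by (rule tri) (simp_all add: F3_adj_def F3_edges_def)
  define k where "k = (5*om+3) div 4"
  have kk: "5*om \<le> 4*k" and kk2: "4*k \<le> 5*om+3" unfolding k_def by arith+
  define p q r where "p = a x" and "q = a y" and "r = a z"
  define al where "al = min p (k-(q+r+a v5))"
  define be where "be = min q (k-(p+r+a v1))"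
  define ga where "ga = min r (k-(p+q+a v3))"
  note C = core[of p q r om "a v3" "a v5" "a v1" "a v2" "a v4" "a v6" k al be ga,
    OF t1[folded p_def q_def r_def] t2[folded p_def q_def r_def] t3[folded p_def q_def r_def]
       t4[folded p_def q_def r_def] t5[folded p_def q_def r_def] t6[folded p_def q_def r_def]
       t7[folded p_def q_def r_def] t8[folded p_def q_def r_def] t9[folded p_def q_def r_def]
       t10[folded p_def q_def r_def] kk al_def be_def ga_def]
  interpret P: cpar a p q r al be ga k "a v1-(q-be)" "a v2-(be+ga)" "a v3-(r-ga)"
     "a v4-(al+ga)" "a v5-(p-al)" "a v6-(al+be)"
  proof
    show "p = a x" "q = a y" "r = a z" by (simp_all add: p_def q_def r_def)
    show lb: "al \<le> p" "be \<le> q" "ga \<le> r" by (simp_all add: al_def be_def ga_def)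
    show "a v1 + be \<le> q + (a v1-(q-be))" using lb by arith
    show "a v2 \<le> be+ga+(a v2-(be+ga))" by arith
    show "a v3 + ga \<le> r + (a v3-(r-ga))" using lb by arith
    show "a v4 \<le> al+ga+(a v4-(al+ga))" by arith
    show "a v5 + al \<le> p + (a v5-(p-al))" using lb by arith
    show "a v6 \<le> al+be+(a v6-(al+be))" by arith
  qed (use C in simp_all)
  have "\<forall>h. \<exists>f. bij_betw f (Q h) {0..<a h}"
    using ex_bij_betw_finite_nat finQ unfolding a_def by blast
  then obtain F where F: "\<And>h. bij_betw (F h) (Q h) {0..<a h}" using choice by metis
  define hv where "hv v = (SOME h. v \<in> Q h)" for v
  have hvQ: "v \<in> Q (hv v)" if "v \<in> V" for v
    unfolding hv_def using that QU by (metis (mono_tags) UN_E someI_ex)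
  have hvU: "hv v = h" if "v \<in> Q h" for v h
    using hvQ[of v] QD[of "hv v" h] that QV by blast
  define c where "c v = gcol p q r al be ga k (hv v) (F (hv v) v)" for v
  have Flt: "F h v < a h" if "v \<in> Q h" for h v
    using bij_betw_apply[OF F that] by simp
  have col: "colouring V E k c"
    unfolding colouring_def
  proof (intro conjI ballI impI)
    fix v assume "v \<in> V"
    then show "c v < k" unfolding c_def using P.range Flt hvQ by blast
  next
    fix v w assume v: "v \<in> V" and w: "w \<in> V" and e: "E v w"
    show "c v \<noteq> c w"
    proof (cases "hv v = hv w")
      case True
      have "v \<noteq> w" using e irr v by auto
      then have "F (hv v) v \<noteq> F (hv v) w"
        using bij_betw_imp_inj_on[OF F] hvQ v w True unfolding inj_on_def by metis
      then show ?thesis unfolding c_def using P.inj Flt hvQ v w True by metis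
    next
      case False
      then have "F3_adj (hv v) (hv w)" using QE hvQ v w e by blast
      then show ?thesis unfolding c_def using P.disj Flt hvQ v w by blast
    qed
  qed
  have "chromatic_number V E \<le> k"
    unfolding chromatic_number_def using col by (intro Least_le) blast
  moreover have "int k \<le> \<lceil>(5/4::real) * real om\<rceil>"
  proof -
    have "real (4*k) \<le> real (5*om+3)" using kk2 by linarith
    then have "real k - 1 < (5/4::real) * real om" by simp
    then show ?thesis by (simp add: le_ceiling_iff)
  qed
  ultimately show ?thesis unfolding om_def by linarith
qed

end
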